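(* For every integer $n\geq 7$, $\dot{\imath}_{[1,2]}(P_7\Box P_n)=\left\lfloor \frac{5n+3}{3}\right\rfloor$.
   Context: $P_k$ denotes the path on $k$ vertices and $P_m\Box P_n$ the Cartesian product of two paths (the $m\times n$ grid graph). A set $S$ of vertices of a graph $G$ is independent if no two vertices of $S$ are adjacent, and dominating if every vertex not in $S$ has at least one neighbor in $S$. An independent $[1,2]$-set of $G$ is an independent dominating set $S$ such that every vertex $v\in V(G)\setminus S$ has at least one and at most two neighbors in $S$. When $G$ has an independent $[1,2]$-set, $\dot{\imath}_{[1,2]}(G)$ denotes the minimum cardinality of an independent $[1,2]$-set of $G$ (the statement includes the existence of such a set). *)

theory Defs
  imports Main
begin

definition grid_vertices :: "nat \<Rightarrow> nat \<Rightarrow> (nat \<times> nat) set" where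
  "grid_vertices m n = {0..<m} \<times> {0..<n}"

definition grid_adj :: "nat \<Rightarrow> nat \<Rightarrow> nat \<times> nat \<Rightarrow> nat \<times> nat \<Rightarrow> bool" where
  "grid_adj m n u v \<longleftrightarrow> u \<in> grid_vertices m n \<and> v \<in> grid_vertices m n \<and>
     ((fst u = fst v \<and> (snd u + 1 = snd v \<or> snd v + 1 = snd u)) \<or>
      (snd u = snd v \<and> (fst u + 1 = fst v \<or> fst v + 1 = fst u)))"

definition independent_set :: "'a set \<Rightarrow> ('a \<Rightarrow> 'a \<Rightarrow> bool) \<Rightarrow> 'a set \<Rightarrow> bool" where
  "independent_set V adj S \<longleftrightarrow> S \<subseteq> V \<and> (\<forall>x\<in>S. \<forall>y\<in>S. \<not> adj x y)"

definition dominating_set :: "'a set \<Rightarrow> ('a \<Rightarrow> 'a \<Rightarrow> bool) \<Rightarrow> 'a set \<Rightarrow> bool" where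
  "dominating_set V adj S \<longleftrightarrow> S \<subseteq> V \<and> (\<forall>v\<in>V - S. \<exists>u\<in>S. adj v u)"

definition indep_12_set :: "'a set \<Rightarrow> ('a \<Rightarrow> 'a \<Rightarrow> bool) \<Rightarrow> 'a set \<Rightarrow> bool" where
  "indep_12_set V adj S \<longleftrightarrow> independent_set V adj S \<and> dominating_set V adj S \<and>
     (\<forall>v\<in>V - S. 1 \<le> card {u\<in>S. adj v u} \<and> card {u\<in>S. adj v u} \<le> 2)"

definition indep_12_number :: "'a set \<Rightarrow> ('a \<Rightarrow> 'a \<Rightarrow> bool) \<Rightarrow> nat" where
  "indep_12_number V adj = (LEAST k. \<exists>S. indep_12_set V adj S \<and> card S = k)"

end

theory Submission
  imports Defs
begin


datatype 'a trie = Lf 'a | Nd "'a trie" "'a trie"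

fun lkp :: "int option trie \<Rightarrow> bool list \<Rightarrow> int option" where
  "lkp (Lf x) _ = x"
| "lkp (Nd l r) [] = None"
| "lkp (Nd l r) (x#xs) = lkp (if x then l else r) xs"

definition Z :: "bool list" where "Z = replicate 7 False"

fun indepc :: "bool list \<Rightarrow> bool" where
  "indepc (x#y#r) = (\<not>(x\<and>y) \<and> indepc (y#r))"
| "indepc _ = True"

definition cnt :: "bool list \<Rightarrow> nat" where "cnt xs = length (filter id xs)"

definition nb :: "bool list \<Rightarrow> bool list \<Rightarrow> bool list \<Rightarrow> nat \<Rightarrow> nat" where
  "nb a b c i = of_bool (a!i) + of_bool (c!i) + of_bool (0<i \<and> b!(i-1)) + of_bool (i+1<7 \<and> b!(i+1))"

definition ok :: "bool list \<Rightarrow> bool list \<Rightarrow> bool list \<Rightarrow> bool" where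
  "ok a b c \<longleftrightarrow> length a = 7 \<and> length b = 7 \<and> length c = 7 \<and>
     (\<forall>i\<in>set [0..<7]. b!i \<longrightarrow> \<not>(i+1<7 \<and> b!(i+1)) \<and> \<not> c!i) \<and>
     (\<forall>i\<in>set [0..<7]. \<not> b!i \<longrightarrow> 1 \<le> nb a b c i \<and> nb a b c i \<le> 2)"

definition indepcols :: "bool list list" where
  "indepcols = filter indepc (List.n_lists 7 [True,False])"

definition T :: "int option trie" where
  "T = Nd (Nd (Lf None) (Nd (Nd (Lf None) (Nd (Nd (Lf None) (Nd (Nd (Lf None) (Nd (Lf None) (Nd (Lf None) (Nd (Lf None) (Nd (Lf None) (Nd (Lf None) (Nd (Lf None) (Lf (Some (1)))))))))) (Nd (Lf None) (Nd (Lf None) (Nd (Lf None) (Nd (Lf None) (Nd (Lf None) (Nd (Nd (Lf None) (Lf (Some (2)))) (Nd (Lf (Some (2))) (Lf (Some (-1)))))))))))) (Nd (Nd (Lf None) (Nd (Lf None) (Nd (Lf None) (Nd (Lf None) (Nd (Nd (Lf None) (Nd (Lf None) (Nd (Lf (Some (4))) (Lf (Some (1)))))) (Nd (Nd (Lf None) (Nd (Lf (Some (5))) (Lf (Some (2))))) (Nd (Lf None) (Nd (Lf (Some (1))) (Lf (Some (-2))))))))))) (Nd (Nd (Lf None) (Nd (Lf None) (Nd (Lf None) (Nd (Nd (Lf None) (Nd (Nd (Lf None) (Lf (Some (4)))) (Nd (Lf None) (Lf (Some (1)))))) (Nd (Nd (Lf None) (Nd (Lf None) (Lf (Some (1)))))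 (Nd (Nd (Lf None) (Lf (Some (1)))) (Nd (Lf None) (Lf (Some (-2)))))))))) (Nd (Lf None) (Nd (Lf None) (Nd (Lf None) (Nd (Nd (Lf None) (Nd (Nd (Lf None) (Lf (Some (4)))) (Lf None))) (Nd (Nd (Lf None) (Nd (Lf (Some (3))) (Lf None))) (Nd (Nd (Lf None) (Lf (Some (1)))) (Lf None))))))))))) (Nd (Nd (Lf None) (Nd (Nd (Lf None) (Nd (Lf None) (Nd (Nd (Lf None) (Nd (Lf None) (Nd (Lf None) (Nd (Lf None) (Nd (Lf (Some (5))) (Lf (Some (2)))))))) (Nd (Nd (Lf None) (Nd (Lf None) (Nd (Lf None) (Nd (Lf (Some (5))) (Lf (Some (2))))))) (Nd (Lf None) (Nd (Lf None) (Nd (Lf None) (Nd (Lf (Some (2))) (Lf (Some (-1))))))))))) (Nd (Nd (Lf None) (Nd (Nd (Lf None) (Nd (Lf None) (Nd (Nd (Lf None) (Nd (Lf None) (Lf (Some (5))))) (Nd (Nd (Lf None) (Lf (Some (5)))) (Nd (Lf None) (Lf (Some (2)))))))) (Nd (Nd (Lf None) (Nd (Nd (Lf None) (Nd (Lf None) (Lf (Some (5))))) (Nd (Nd (Lf None) (Lf (Some (5)))) (Nd (Lf None) (Lf (Some (2))))))) (Nd (Lf None) (Nd (Nd (Lf None) (Nd (Lf None) (Lf (Some (2))))) (Nd (Nd (Lf None) (Lf (Some (2)))) (Nd (Lf None) (Lf (Some (-1)))))))))) (Nd (Lf None) (Nd (Nd (Lf None) (Nd (Lf None) (Nd (Nd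 (Lf None) (Nd (Lf (Some (6))) (Lf None))) (Nd (Nd (Lf None) (Lf (Some (4)))) (Nd (Lf (Some (3))) (Lf None)))))) (Nd (Nd (Lf None) (Nd (Nd (Lf None) (Nd (Lf (Some (6))) (Lf None))) (Nd (Nd (Lf None) (Lf (Some (4)))) (Nd (Lf (Some (3))) (Lf None))))) (Nd (Lf None) (Nd (Nd (Lf None) (Nd (Lf (Some (3))) (Lf None))) (Nd (Nd (Lf None) (Lf (Some (1)))) (Nd (Lf (Some (0))) (Lf None))))))))))) (Nd (Nd (Lf None) (Nd (Nd (Lf None) (Nd (Nd (Lf None) (Nd (Nd (Lf None) (Nd (Lf None) (Nd (Lf None) (Lf (Some (4)))))) (Nd (Lf None) (Nd (Lf None) (Nd (Lf None) (Lf (Some (1)))))))) (Nd (Nd (Lf None) (Nd (Lf None) (Nd (Lf None) (Nd (Lf None) (Lf (Some (1))))))) (Nd (Nd (Lf None) (Nd (Lf None) (Nd (Lf None) (Lf (Some (1)))))) (Nd (Lf None) (Nd (Lf None) (Nd (Lf None) (Lf (Some (-2)))))))))) (Nd (Lf None) (Nd (Nd (Lf None) (Nd (Nd (Lf None) (Nd (Nd (Lf None) (Lf (Some (6)))) (Nd (Lf (Some (6))) (Lf (Some (3)))))) (Nd (Lf None) (Nd (Nd (Lf None) (Lf (Some (3)))) (Nd (Lf (Some (3))) (Lf (Some (0)))))))) (Nd (Nd (Lf None) (Nd (Lf None) (Nd (Nd (Lf None) (Lf (Some (3)))) (Nd (Lf (Some (2))) (Lf (Some (0))))))) (Nd (Nd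 (Lf None) (Nd (Nd (Lf None) (Lf (Some (3)))) (Nd (Lf (Some (3))) (Lf (Some (0)))))) (Nd (Lf None) (Nd (Nd (Lf None) (Lf (Some (0)))) (Nd (Lf (Some (0))) (Lf (Some (-3)))))))))))) (Nd (Nd (Lf None) (Nd (Lf None) (Nd (Nd (Lf None) (Nd (Nd (Lf None) (Nd (Lf None) (Nd (Lf (Some (6))) (Lf (Some (3)))))) (Lf None))) (Nd (Nd (Lf None) (Nd (Nd (Lf None) (Nd (Lf (Some (5))) (Lf (Some (2))))) (Nd (Lf None) (Nd (Lf (Some (2))) (Lf (Some (-1))))))) (Nd (Nd (Lf None) (Nd (Lf None) (Nd (Lf (Some (3))) (Lf (Some (0)))))) (Lf None)))))) (Nd (Nd (Lf None) (Nd (Nd (Lf None) (Nd (Nd (Lf None) (Nd (Nd (Lf None) (Lf (Some (6)))) (Nd (Lf None) (Lf (Some (3)))))) (Lf None))) (Nd (Nd (Lf None) (Nd (Nd (Lf None) (Nd (Lf None) (Lf (Some (1))))) (Lf None))) (Nd (Nd (Lf None) (Nd (Nd (Lf None) (Lf (Some (3)))) (Nd (Lf None) (Lf (Some (0)))))) (Lf None))))) (Nd (Lf None) (Nd (Nd (Lf None) (Nd (Nd (Lf None) (Nd (Nd (Lf None) (Lf (Some (6)))) (Lf None))) (Lf None))) (Nd (Nd (Lf None) (Nd (Nd (Lf None) (Nd (Lf (Some (4))) (Lf None))) (Lf None))) (Nd (Nd (Lf None) (Nd (Nd (Lf None) (Lf (Some (3)))) (Lf None))) (Lf None)))))))))))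 (Nd (Nd (Lf None) (Nd (Nd (Lf None) (Nd (Nd (Lf None) (Nd (Nd (Lf None) (Nd (Lf None) (Nd (Lf None) (Nd (Lf None) (Nd (Lf None) (Nd (Lf (Some (5))) (Lf (Some (2))))))))) (Nd (Lf None) (Nd (Lf None) (Nd (Lf None) (Nd (Lf None) (Nd (Lf None) (Nd (Lf (Some (2))) (Lf (Some (-1))))))))))) (Nd (Nd (Nd (Lf None) (Nd (Lf None) (Nd (Lf None) (Nd (Nd (Lf None) (Nd (Lf None) (Lf (Some (5))))) (Nd (Nd (Lf None) (Lf (Some (5)))) (Nd (Lf None) (Lf (Some (2))))))))) (Nd (Lf None) (Nd (Lf None) (Nd (Lf None) (Nd (Nd (Lf None) (Nd (Lf None) (Lf (Some (2))))) (Nd (Nd (Lf None) (Lf (Some (2)))) (Nd (Lf None) (Lf (Some (-1)))))))))) (Nd (Nd (Lf None) (Nd (Lf None) (Nd (Lf None) (Nd (Nd (Lf None) (Nd (Lf (Some (6))) (Lf None))) (Nd (Nd (Lf None) (Lf (Some (4)))) (Nd (Lf (Some (3))) (Lf None))))))) (Nd (Lf None) (Nd (Lf None) (Nd (Lf None) (Nd (Nd (Lf None) (Nd (Lf (Some (3))) (Lf None))) (Nd (Nd (Lf None) (Lf (Some (1)))) (Nd (Lf (Some (0))) (Lf None))))))))))) (Nd (Nd (Lf None) (Nd (Nd (Nd (Lf None) (Nd (Nd (Lf None) (Nd (Lf None) (Nd (Lf None) (Nd (Lf None) (Lf (Some (5))))))) (Nd (Nd (Lf None) (Nd (Lf None)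 (Nd (Lf None) (Lf (Some (4)))))) (Nd (Lf None) (Nd (Lf None) (Nd (Lf None) (Lf (Some (1))))))))) (Nd (Lf None) (Nd (Nd (Lf None) (Nd (Lf None) (Nd (Lf None) (Nd (Lf None) (Lf (Some (2))))))) (Nd (Nd (Lf None) (Nd (Lf None) (Nd (Lf None) (Lf (Some (1)))))) (Nd (Lf None) (Nd (Lf None) (Nd (Lf None) (Lf (Some (-2)))))))))) (Nd (Nd (Lf None) (Nd (Nd (Lf None) (Nd (Lf None) (Nd (Nd (Lf None) (Lf (Some (8)))) (Nd (Lf (Some (5))) (Lf (Some (5))))))) (Nd (Nd (Lf None) (Nd (Nd (Lf None) (Lf (Some (7)))) (Nd (Lf (Some (5))) (Lf (Some (4)))))) (Nd (Lf None) (Nd (Nd (Lf None) (Lf (Some (4)))) (Nd (Lf (Some (2))) (Lf (Some (1))))))))) (Nd (Lf None) (Nd (Nd (Lf None) (Nd (Lf None) (Nd (Nd (Lf None) (Lf (Some (5)))) (Nd (Lf (Some (2))) (Lf (Some (2))))))) (Nd (Nd (Lf None) (Nd (Nd (Lf None) (Lf (Some (4)))) (Nd (Lf (Some (2))) (Lf (Some (1)))))) (Nd (Lf None) (Nd (Nd (Lf None) (Lf (Some (1)))) (Nd (Lf (Some (-1))) (Lf (Some (-2)))))))))))) (Nd (Nd (Lf None) (Nd (Nd (Lf None) (Nd (Nd (Lf None) (Nd (Nd (Lf None) (Nd (Lf (Some (8))) (Lf (Some (5))))) (Nd (Lf None) (Nd (Lf (Some (5))) (Lf (Some (2))))))) (Nd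 (Nd (Lf None) (Nd (Lf None) (Nd (Lf (Some (5))) (Lf (Some (2)))))) (Nd (Nd (Lf None) (Nd (Lf (Some (5))) (Lf (Some (2))))) (Nd (Lf None) (Nd (Lf (Some (2))) (Lf (Some (-1))))))))) (Nd (Lf None) (Nd (Nd (Lf None) (Nd (Nd (Lf None) (Nd (Lf (Some (5))) (Lf (Some (2))))) (Nd (Lf None) (Nd (Lf (Some (2))) (Lf (Some (-1))))))) (Nd (Nd (Lf None) (Nd (Lf None) (Nd (Lf (Some (2))) (Lf (Some (-1)))))) (Nd (Nd (Lf None) (Nd (Lf (Some (2))) (Lf (Some (-1))))) (Nd (Lf None) (Nd (Lf (Some (-1))) (Lf (Some (-4))))))))))) (Nd (Nd (Nd (Lf None) (Nd (Nd (Lf None) (Nd (Nd (Lf None) (Nd (Lf None) (Lf (Some (5))))) (Lf None))) (Nd (Nd (Lf None) (Nd (Nd (Lf None) (Lf (Some (6)))) (Nd (Lf None) (Lf (Some (3)))))) (Nd (Nd (Lf None) (Nd (Lf None) (Lf (Some (2))))) (Lf None))))) (Nd (Lf None) (Nd (Nd (Lf None) (Nd (Nd (Lf None) (Nd (Lf None) (Lf (Some (2))))) (Lf None))) (Nd (Nd (Lf None) (Nd (Nd (Lf None) (Lf (Some (3)))) (Nd (Lf None) (Lf (Some (0)))))) (Nd (Nd (Lf None) (Nd (Lf None) (Lf (Some (-1))))) (Lf None)))))) (Nd (Nd (Lf None) (Nd (Nd (Lf None) (Nd (Nd (Lf None) (Nd (Lf (Some (8))) (Lf None))) (Lf None)))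 (Nd (Nd (Lf None) (Nd (Nd (Lf None) (Lf (Some (5)))) (Lf None))) (Nd (Nd (Lf None) (Nd (Lf (Some (5))) (Lf None))) (Lf None))))) (Nd (Lf None) (Nd (Nd (Lf None) (Nd (Nd (Lf None) (Nd (Lf (Some (5))) (Lf None))) (Lf None))) (Nd (Nd (Lf None) (Nd (Nd (Lf None) (Lf (Some (2)))) (Lf None))) (Nd (Nd (Lf None) (Nd (Lf (Some (2))) (Lf None))) (Lf None))))))))))) (Nd (Nd (Lf None) (Nd (Nd (Lf None) (Nd (Nd (Nd (Lf None) (Nd (Lf None) (Nd (Lf None) (Nd (Lf None) (Nd (Lf None) (Nd (Lf None) (Lf (Some (2))))))))) (Nd (Nd (Lf None) (Nd (Lf None) (Nd (Lf None) (Nd (Lf None) (Nd (Lf None) (Lf (Some (2)))))))) (Nd (Lf None) (Nd (Lf None) (Nd (Lf None) (Nd (Lf None) (Nd (Lf None) (Lf (Some (-1)))))))))) (Nd (Nd (Lf None) (Nd (Lf None) (Nd (Lf None) (Nd (Lf None) (Nd (Nd (Lf None) (Lf (Some (2)))) (Nd (Lf (Some (2))) (Lf (Some (-1))))))))) (Nd (Nd (Lf None) (Nd (Lf None) (Nd (Lf None) (Nd (Nd (Lf None) (Lf (Some (2)))) (Nd (Lf (Some (2))) (Lf (Some (-1)))))))) (Nd (Lf None) (Nd (Lf None) (Nd (Lf None) (Nd (Nd (Lf None) (Lf (Some (-1)))) (Nd (Lf (Some (-1))) (Lf (Some (-4)))))))))))) (Nd (Nd (Lf None) (Nd (Nd (Lf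 None) (Nd (Lf None) (Nd (Nd (Lf None) (Nd (Lf None) (Nd (Lf (Some (5))) (Lf (Some (2)))))) (Nd (Nd (Lf None) (Nd (Lf (Some (5))) (Lf (Some (2))))) (Nd (Lf None) (Nd (Lf (Some (2))) (Lf (Some (-1))))))))) (Nd (Nd (Lf None) (Nd (Nd (Lf None) (Nd (Lf None) (Nd (Lf (Some (7))) (Lf (Some (4)))))) (Nd (Nd (Lf None) (Nd (Lf (Some (8))) (Lf (Some (5))))) (Nd (Lf None) (Nd (Lf (Some (4))) (Lf (Some (1)))))))) (Nd (Lf None) (Nd (Nd (Lf None) (Nd (Lf None) (Nd (Lf (Some (4))) (Lf (Some (1)))))) (Nd (Nd (Lf None) (Nd (Lf (Some (5))) (Lf (Some (2))))) (Nd (Lf None) (Nd (Lf (Some (1))) (Lf (Some (-2))))))))))) (Nd (Nd (Nd (Lf None) (Nd (Lf None) (Nd (Nd (Lf None) (Nd (Nd (Lf None) (Lf (Some (6)))) (Nd (Lf None) (Lf (Some (3)))))) (Nd (Nd (Lf None) (Nd (Lf None) (Lf (Some (2))))) (Nd (Nd (Lf None) (Lf (Some (3)))) (Nd (Lf None) (Lf (Some (0))))))))) (Nd (Nd (Lf None) (Nd (Nd (Lf None) (Nd (Nd (Lf None) (Lf (Some (6)))) (Nd (Lf None) (Lf (Some (3)))))) (Nd (Nd (Lf None) (Nd (Lf None) (Lf (Some (3))))) (Nd (Nd (Lf None) (Lf (Some (3)))) (Nd (Lf None) (Lf (Some (0)))))))) (Nd (Lf None) (Nd (Nd (Lf None)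 (Nd (Nd (Lf None) (Lf (Some (3)))) (Nd (Lf None) (Lf (Some (0)))))) (Nd (Nd (Lf None) (Nd (Lf None) (Lf (Some (0))))) (Nd (Nd (Lf None) (Lf (Some (0)))) (Nd (Lf None) (Lf (Some (-3)))))))))) (Nd (Nd (Lf None) (Nd (Lf None) (Nd (Nd (Lf None) (Nd (Nd (Lf None) (Lf (Some (5)))) (Lf None))) (Nd (Nd (Lf None) (Nd (Lf (Some (3))) (Lf None))) (Nd (Nd (Lf None) (Lf (Some (2)))) (Lf None)))))) (Nd (Nd (Lf None) (Nd (Nd (Lf None) (Nd (Nd (Lf None) (Lf (Some (5)))) (Lf None))) (Nd (Nd (Lf None) (Nd (Lf (Some (3))) (Lf None))) (Nd (Nd (Lf None) (Lf (Some (2)))) (Lf None))))) (Nd (Lf None) (Nd (Nd (Lf None) (Nd (Nd (Lf None) (Lf (Some (2)))) (Lf None))) (Nd (Nd (Lf None) (Nd (Lf (Some (0))) (Lf None))) (Nd (Nd (Lf None) (Lf (Some (-1)))) (Lf None))))))))))) (Nd (Nd (Lf None) (Nd (Nd (Lf None) (Nd (Nd (Lf None) (Nd (Nd (Lf None) (Nd (Lf None) (Nd (Lf None) (Nd (Lf (Some (6))) (Lf (Some (3))))))) (Nd (Lf None) (Nd (Lf None) (Nd (Lf None) (Nd (Lf (Some (3))) (Lf (Some (0))))))))) (Nd (Nd (Lf None) (Nd (Lf None) (Nd (Lf None) (Nd (Lf None) (Nd (Lf (Some (4))) (Lf (Some (1)))))))) (Lf None)))) (Nd (Nd (Nd (Lf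 None) (Nd (Nd (Lf None) (Nd (Nd (Lf None) (Nd (Lf None) (Lf (Some (6))))) (Nd (Nd (Lf None) (Lf (Some (6)))) (Nd (Lf None) (Lf (Some (3))))))) (Nd (Lf None) (Nd (Nd (Lf None) (Nd (Lf None) (Lf (Some (3))))) (Nd (Nd (Lf None) (Lf (Some (3)))) (Nd (Lf None) (Lf (Some (0))))))))) (Nd (Nd (Lf None) (Nd (Lf None) (Nd (Nd (Lf None) (Nd (Lf None) (Lf (Some (4))))) (Nd (Nd (Lf None) (Lf (Some (4)))) (Nd (Lf None) (Lf (Some (1)))))))) (Lf None))) (Nd (Nd (Lf None) (Nd (Nd (Lf None) (Nd (Nd (Lf None) (Nd (Lf (Some (6))) (Lf None))) (Nd (Nd (Lf None) (Lf (Some (4)))) (Nd (Lf (Some (3))) (Lf None))))) (Nd (Lf None) (Nd (Nd (Lf None) (Nd (Lf (Some (3))) (Lf None))) (Nd (Nd (Lf None) (Lf (Some (1)))) (Nd (Lf (Some (0))) (Lf None))))))) (Nd (Nd (Lf None) (Nd (Lf None) (Nd (Nd (Lf None) (Nd (Lf (Some (4))) (Lf None))) (Nd (Nd (Lf None) (Lf (Some (1)))) (Nd (Lf (Some (1))) (Lf None)))))) (Lf None)))))) (Nd (Nd (Lf None) (Nd (Nd (Nd (Lf None) (Nd (Nd (Lf None) (Nd (Lf None) (Nd (Lf None) (Nd (Lf None) (Lf (Some (3))))))) (Lf None))) (Nd (Nd (Lf None) (Nd (Nd (Lf None) (Nd (Lf None) (Nd (Lf None) (Lf (Some (4)))))) (Nd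 (Lf None) (Nd (Lf None) (Nd (Lf None) (Lf (Some (1)))))))) (Lf None))) (Nd (Nd (Lf None) (Nd (Nd (Lf None) (Nd (Lf None) (Nd (Nd (Lf None) (Lf (Some (3)))) (Nd (Lf (Some (3))) (Lf (Some (0))))))) (Lf None))) (Nd (Nd (Lf None) (Nd (Nd (Lf None) (Nd (Nd (Lf None) (Lf (Some (5)))) (Nd (Lf (Some (5))) (Lf (Some (2)))))) (Nd (Lf None) (Nd (Nd (Lf None) (Lf (Some (2)))) (Nd (Lf (Some (2))) (Lf (Some (-1)))))))) (Lf None))))) (Nd (Nd (Lf None) (Nd (Nd (Lf None) (Nd (Nd (Lf None) (Nd (Nd (Lf None) (Nd (Lf (Some (8))) (Lf (Some (5))))) (Nd (Lf None) (Nd (Lf (Some (5))) (Lf (Some (2))))))) (Lf None))) (Nd (Nd (Lf None) (Nd (Nd (Lf None) (Nd (Lf None) (Nd (Lf (Some (5))) (Lf (Some (2)))))) (Lf None))) (Lf None)))) (Nd (Nd (Nd (Lf None) (Nd (Nd (Lf None) (Nd (Nd (Lf None) (Nd (Lf None) (Lf (Some (4))))) (Lf None))) (Lf None))) (Nd (Nd (Lf None) (Nd (Nd (Lf None) (Nd (Nd (Lf None) (Lf (Some (6)))) (Nd (Lf None) (Lf (Some (3)))))) (Lf None))) (Lf None))) (Nd (Nd (Lf None) (Nd (Nd (Lf None) (Nd (Nd (Lf None) (Nd (Lf (Some (6))) (Lf (Some (4))))) (Nd (Nd (Lf None) (Lf (Some (4)))) (Nd (Lf (Some (4))) (Lf (Some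 (1))))))) (Nd (Nd (Lf None) (Nd (Nd (Lf None) (Lf (Some (4)))) (Nd (Lf (Some (4))) (Lf (Some (1)))))) (Nd (Nd (Lf None) (Nd (Lf (Some (4))) (Lf (Some (1))))) (Nd (Nd (Lf None) (Lf (Some (1)))) (Nd (Lf (Some (1))) (Lf (Some (-2))))))))) (Nd (Nd (Lf None) (Nd (Nd (Lf None) (Nd (Nd (Lf None) (Lf (Some (4)))) (Nd (Lf (Some (4))) (Lf (Some (1)))))) (Nd (Nd (Lf None) (Nd (Lf (Some (4))) (Lf (Some (1))))) (Nd (Nd (Lf None) (Lf (Some (1)))) (Nd (Lf (Some (1))) (Lf (Some (-2)))))))) (Nd (Nd (Lf None) (Nd (Nd (Lf None) (Nd (Lf (Some (4))) (Lf (Some (1))))) (Nd (Nd (Lf None) (Lf (Some (1)))) (Nd (Lf (Some (1))) (Lf (Some (-2))))))) (Nd (Nd (Lf None) (Nd (Nd (Lf None) (Lf (Some (1)))) (Nd (Lf (Some (1))) (Lf (Some (-2)))))) (Nd (Nd (Lf None) (Nd (Lf (Some (1))) (Lf (Some (-2))))) (Nd (Nd (Lf None) (Lf (Some (-2)))) (Nd (Lf (Some (-2))) (Lf (Some (-5))))))))))))))))"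

definition check_init where
  "check_init \<longleftrightarrow> (\<forall>b\<in>set indepcols. case lkp T (Z@b) of None \<Rightarrow> False | Some p \<Rightarrow> p \<le> 3 * int (cnt b) - 5)"
definition check_final where
  "check_final \<longleftrightarrow> (\<forall>a\<in>set indepcols. \<forall>b\<in>set indepcols. case lkp T (a@b) of None \<Rightarrow> True | Some p \<Rightarrow> ok a b Z \<longrightarrow> 1 \<le> p)"
definition check_trans where
  "check_trans \<longleftrightarrow> (\<forall>a\<in>set indepcols. \<forall>b\<in>set indepcols. case lkp T (a@b) of None \<Rightarrow> True | Some p \<Rightarrow>
      (\<forall>c\<in>set indepcols. ok a b c \<longrightarrow> (case lkp T (b@c) of None \<Rightarrow> False | Some q \<Rightarrow> q \<le> p + 3 * int (cnt c) - 5)))"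




lemma ci: check_init by code_simp
lemma cf: check_final by code_simp
lemma ct: check_trans by code_simp


fun tok :: "bool list list \<Rightarrow> bool" where
  "tok (a#b#c#r) = (ok a b c \<and> tok (b#c#r))"
| "tok _ = True"

lemma tok_nth: "tok L \<longleftrightarrow> (\<forall>k. k+2 < length L \<longrightarrow> ok (L!k) (L!(k+1)) (L!(k+2)))"
proof (induction L rule: tok.induct)
  case (1 a b c r)
  show ?case
  proof
    assume h: "tok (a#b#c#r)"
    show "\<forall>k. k+2 < length (a#b#c#r) \<longrightarrow> ok ((a#b#c#r)!k) ((a#b#c#r)!(k+1)) ((a#b#c#r)!(k+2))"
    proof (intro allI impI)
      fix k assume k: "k+2 < length (a#b#c#r)"
      show "ok ((a#b#c#r)!k) ((a#b#c#r)!(k+1)) ((a#b#c#r)!(k+2))"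
      proof (cases k)
        case 0 then show ?thesis using h by simp
      next
        case (Suc m) then show ?thesis using h k 1 by auto
      qed
    qed
  next
    assume h: "\<forall>k. k+2 < length (a#b#c#r) \<longrightarrow> ok ((a#b#c#r)!k) ((a#b#c#r)!(k+1)) ((a#b#c#r)!(k+2))"
    have "ok a b c" using h[rule_format, of 0] by simp
    moreover have "tok (b#c#r)" unfolding 1
    proof (intro allI impI)
      fix k assume "k+2 < length (b#c#r)"
      then show "ok ((b#c#r)!k) ((b#c#r)!(k+1)) ((b#c#r)!(k+2))"
        using h[rule_format, of "Suc k"] by simp
    qed
    ultimately show "tok (a#b#c#r)" by simp
  qed
qed auto

lemma tok_append: "tok (xs @ y # z # R) = (tok (xs @ [y, z]) \<and> tok (y # z # R))"
proof (induction xs rule: tok.induct)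
  case (1 a b c r)
  then show ?case by auto
next
  case ("2_1") then show ?case by simp
next
  case ("2_2" a) then show ?case by simp
next
  case ("2_3" a b) then show ?case by simp
qed

lemma indepc_nth: "indepc xs \<longleftrightarrow> (\<forall>i. i+1 < length xs \<longrightarrow> \<not>(xs!i \<and> xs!(i+1)))"
proof (induction xs rule: indepc.induct)
  case (1 x y r)
  show ?case
  proof
    assume "indepc (x#y#r)"
    then show "\<forall>i. i+1 < length (x#y#r) \<longrightarrow> \<not>((x#y#r)!i \<and> (x#y#r)!(i+1))"
      using 1 by (auto simp: nth_Cons split: nat.splits)
  next
    assume h: "\<forall>i. i+1 < length (x#y#r) \<longrightarrow> \<not>((x#y#r)!i \<and> (x#y#r)!(i+1))"
    have "\<not>(x\<and>y)" using h[rule_format, of 0] by simp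
    moreover have "indepc (y#r)" unfolding 1
    proof (intro allI impI)
      fix i assume "i+1 < length (y#r)"
      then show "\<not>((y#r)!i \<and> (y#r)!(i+1))" using h[rule_format, of "Suc i"] by simp
    qed
    ultimately show "indepc (x#y#r)" by simp
  qed
qed auto

lemma ok_mid: assumes "ok a b c" shows "b \<in> set indepcols"
proof -
  have l: "length b = 7" using assms by (simp add: ok_def)
  have "\<forall>i<7. b!i \<longrightarrow> \<not>(i+1<7 \<and> b!(i+1))" using assms by (simp add: ok_def)
  then have "indepc b" using l by (auto simp: indepc_nth)
  moreover have "b \<in> set (List.n_lists 7 [True,False])"
    using l by (auto simp: set_n_lists)
  ultimately show ?thesis by (simp add: indepcols_def)
qed


definition setOf :: "bool list list \<Rightarrow> (nat \<times> nat) set" where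
  "setOf cs = {(i,j). j < length cs \<and> i < 7 \<and> cs!j!i}"

definition col :: "bool list list \<Rightarrow> nat \<Rightarrow> bool list" where
  "col cs j = (if j < length cs then cs!j else Z)"

lemma Z_nth[simp]: "i < 7 \<Longrightarrow> Z!i = False" by (simp add: Z_def)
lemma Z_len[simp]: "length Z = 7" by (simp add: Z_def)

lemma mem_setOf: "i < 7 \<Longrightarrow> (i,j) \<in> setOf cs \<longleftrightarrow> col cs j ! i"
  by (auto simp: setOf_def col_def)

lemma mem_setOf2: "(i,j) \<in> setOf cs \<Longrightarrow> i < 7 \<and> j < length cs"
  by (auto simp: setOf_def)

lemma card_single: "card {u. u = x \<and> P} = of_bool P" by (cases P) auto

lemma count_adj:
  assumes S: "S \<subseteq> grid_vertices m n" and v: "i < m" "j < n"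
  shows "card {u\<in>S. grid_adj m n (i,j) u} =
     of_bool (0<i \<and> (i-1,j)\<in>S) + of_bool ((i+1,j)\<in>S) + of_bool (0<j \<and> (i,j-1)\<in>S) + of_bool ((i,j+1)\<in>S)"
proof -
  let ?A = "{u. u = (i-1,j) \<and> (0<i \<and> (i-1,j)\<in>S)}"
  let ?B = "{u. u = (i+1,j) \<and> (i+1,j)\<in>S}"
  let ?C = "{u. u = (i,j-1) \<and> (0<j \<and> (i,j-1)\<in>S)}"
  let ?D = "{u. u = (i,j+1) \<and> (i,j+1)\<in>S}"
  have eq: "{u\<in>S. grid_adj m n (i,j) u} = ?A \<union> ?B \<union> ?C \<union> ?D"
  proof (rule set_eqI)
    fix u show "u \<in> {u\<in>S. grid_adj m n (i,j) u} \<longleftrightarrow> u \<in> ?A \<union> ?B \<union> ?C \<union> ?D"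
    proof (cases u)
      case (Pair a b)
      show ?thesis using S v unfolding Pair grid_adj_def grid_vertices_def
        by auto
    qed
  qed
  have "card (?A \<union> ?B \<union> ?C \<union> ?D) = card ?A + card ?B + card ?C + card ?D"
    by (subst card_Un_disjoint, simp, simp, force)+ simp
  then show ?thesis unfolding eq card_single .
qed


lemma E_nth:
  assumes "k < length cs"
  shows "(Z#cs@[Z])!(k+1) = col cs k" "(Z#cs@[Z])!(k+2) = col cs (k+1)"
    "(Z#cs@[Z])!k = (if k = 0 then Z else col cs (k-1))"
  using assms by (auto simp: col_def nth_append nth_Cons split: nat.splits)

lemma col_len: "\<forall>c\<in>set cs. length c = 7 \<Longrightarrow> length (col cs j) = 7"
  by (auto simp: col_def)

lemma win:
  assumes len: "\<forall>c\<in>set cs. length c = 7" and k: "k < length cs"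
  shows "ok ((Z#cs@[Z])!k) ((Z#cs@[Z])!(k+1)) ((Z#cs@[Z])!(k+2)) \<longleftrightarrow>
     (\<forall>i<7. (i,k)\<in>setOf cs \<longrightarrow> (i+1,k)\<notin>setOf cs \<and> (i,k+1)\<notin>setOf cs) \<and>
     (\<forall>i<7. (i,k)\<notin>setOf cs \<longrightarrow> 1 \<le> card {u\<in>setOf cs. grid_adj 7 (length cs) (i,k) u} \<and>
                                    card {u\<in>setOf cs. grid_adj 7 (length cs) (i,k) u} \<le> 2)"
proof -
  let ?S = "setOf cs"
  have Ssub: "?S \<subseteq> grid_vertices 7 (length cs)"
    by (auto simp: setOf_def grid_vertices_def)
  have m: "\<And>i j. i < 7 \<Longrightarrow> col cs j ! i \<longleftrightarrow> (i,j) \<in> ?S" using mem_setOf by blast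
  have a: "\<And>i. i < 7 \<Longrightarrow> (Z#cs@[Z])!k!i \<longleftrightarrow> 0 < k \<and> (i,k-1)\<in>?S"
    unfolding E_nth[OF k] by (simp add: m)
  have b: "\<And>i. i < 7 \<Longrightarrow> (Z#cs@[Z])!(k+1)!i \<longleftrightarrow> (i,k)\<in>?S"
    unfolding E_nth[OF k] by (simp add: m)
  have c: "\<And>i. i < 7 \<Longrightarrow> (Z#cs@[Z])!(k+2)!i \<longleftrightarrow> (i,k+1)\<in>?S"
    unfolding E_nth[OF k] by (simp add: m)
  have i1: "\<And>i. (i+1 < 7 \<and> (i+1,k)\<in>?S) \<longleftrightarrow> (i+1,k)\<in>?S" using mem_setOf2 by blast
  have lens: "length ((Z#cs@[Z])!k) = 7" "length ((Z#cs@[Z])!(k+1)) = 7" "length ((Z#cs@[Z])!(k+2)) = 7"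
    unfolding E_nth[OF k] using len by (auto simp: col_len)
  have nbeq: "\<And>i. i < 7 \<Longrightarrow> nb ((Z#cs@[Z])!k) ((Z#cs@[Z])!(k+1)) ((Z#cs@[Z])!(k+2)) i =
      card {u\<in>?S. grid_adj 7 (length cs) (i,k) u}"
  proof -
    fix i :: nat assume i: "i < 7"
    have "nb ((Z#cs@[Z])!k) ((Z#cs@[Z])!(k+1)) ((Z#cs@[Z])!(k+2)) i =
       of_bool (0 < k \<and> (i,k-1)\<in>?S) + of_bool ((i,k+1)\<in>?S) + of_bool (0<i \<and> (i-1,k)\<in>?S)
        + of_bool ((i+1,k)\<in>?S)"
      unfolding nb_def using i a[OF i] c[OF i] b[of "i-1"] b[of "i+1"] i1[of i] by auto
    also have "\<dots> = card {u\<in>?S. grid_adj 7 (length cs) (i,k) u}"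
      using count_adj[OF Ssub i k] by simp
    finally show "nb ((Z#cs@[Z])!k) ((Z#cs@[Z])!(k+1)) ((Z#cs@[Z])!(k+2)) i =
      card {u\<in>?S. grid_adj 7 (length cs) (i,k) u}" .
  qed
  define A where "A = (Z#cs@[Z])!k"
  define B where "B = (Z#cs@[Z])!(k+1)"
  define C where "C = (Z#cs@[Z])!(k+2)"
  have lA: "length A = 7" "length B = 7" "length C = 7" using lens by (simp_all add: A_def B_def C_def)
  have bB: "\<And>i. i < 7 \<Longrightarrow> B!i \<longleftrightarrow> (i,k)\<in>?S" using b unfolding B_def by blast
  have cC: "\<And>i. i < 7 \<Longrightarrow> C!i \<longleftrightarrow> (i,k+1)\<in>?S" using c unfolding C_def by blast
  have nbE: "\<And>i. i < 7 \<Longrightarrow> nb A B C i = card {u\<in>?S. grid_adj 7 (length cs) (i,k) u}"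
    using nbeq unfolding A_def B_def C_def by blast
  have okeq: "ok A B C \<longleftrightarrow> (\<forall>i<7. B!i \<longrightarrow> \<not>(i+1<7 \<and> B!(i+1)) \<and> \<not> C!i) \<and>
     (\<forall>i<7. \<not> B!i \<longrightarrow> 1 \<le> nb A B C i \<and> nb A B C i \<le> 2)"
    unfolding ok_def using lA by (simp add: atLeast0LessThan lessThan_def)
  have p1: "(\<forall>i<7. B!i \<longrightarrow> \<not>(i+1<7 \<and> B!(i+1)) \<and> \<not> C!i) \<longleftrightarrow>
      (\<forall>i<7. (i,k)\<in>?S \<longrightarrow> (i+1,k)\<notin>?S \<and> (i,k+1)\<notin>?S)"
  proof -
    have "\<And>i. i < 7 \<Longrightarrow> (B!i \<longrightarrow> \<not>(i+1<7 \<and> B!(i+1)) \<and> \<not> C!i) \<longleftrightarrow>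
       ((i,k)\<in>?S \<longrightarrow> (i+1,k)\<notin>?S \<and> (i,k+1)\<notin>?S)"
    proof -
      fix i :: nat assume i: "i < 7"
      have "(i+1<7 \<and> B!(i+1)) \<longleftrightarrow> (i+1,k)\<in>?S" using bB[of "i+1"] mem_setOf2[of "i+1" k cs] by blast
      then show "(B!i \<longrightarrow> \<not>(i+1<7 \<and> B!(i+1)) \<and> \<not> C!i) \<longleftrightarrow>
       ((i,k)\<in>?S \<longrightarrow> (i+1,k)\<notin>?S \<and> (i,k+1)\<notin>?S)" using bB[OF i] cC[OF i] by blast
    qed
    then show ?thesis by blast
  qed
  have p2: "(\<forall>i<7. \<not> B!i \<longrightarrow> 1 \<le> nb A B C i \<and> nb A B C i \<le> 2) \<longleftrightarrow>
     (\<forall>i<7. (i,k)\<notin>?S \<longrightarrow> 1 \<le> card {u\<in>?S. grid_adj 7 (length cs) (i,k) u} \<and>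
                                    card {u\<in>?S. grid_adj 7 (length cs) (i,k) u} \<le> 2)"
    using bB nbE by auto
  show ?thesis using okeq p1 p2 unfolding A_def B_def C_def by blast
qed


lemma setOf_sub: "setOf cs \<subseteq> grid_vertices 7 (length cs)"
  by (auto simp: setOf_def grid_vertices_def)

lemma grid_iff:
  assumes len: "\<forall>c\<in>set cs. length c = 7"
  shows "indep_12_set (grid_vertices 7 (length cs)) (grid_adj 7 (length cs)) (setOf cs) \<longleftrightarrow> tok (Z#cs@[Z])"
proof -
  let ?n = "length cs" let ?S = "setOf cs" let ?V = "grid_vertices 7 ?n" let ?adj = "grid_adj 7 ?n"
  let ?P1 = "\<lambda>k. \<forall>i<7. (i,k)\<in>?S \<longrightarrow> (i+1,k)\<notin>?S \<and> (i,k+1)\<notin>?S"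
  let ?P2 = "\<lambda>k. \<forall>i<7. (i,k)\<notin>?S \<longrightarrow> 1 \<le> card {u\<in>?S. ?adj (i,k) u} \<and> card {u\<in>?S. ?adj (i,k) u} \<le> 2"
  have t: "tok (Z#cs@[Z]) \<longleftrightarrow> (\<forall>k<?n. ?P1 k \<and> ?P2 k)"
    unfolding tok_nth using win[OF len] by auto
  have fwd: "indep_12_set ?V ?adj ?S \<Longrightarrow> \<forall>k<?n. ?P1 k \<and> ?P2 k"
  proof (intro allI impI)
    fix k assume I: "indep_12_set ?V ?adj ?S" and k: "k < ?n"
    have ind: "\<And>x y. x\<in>?S \<Longrightarrow> y\<in>?S \<Longrightarrow> \<not> ?adj x y" using I
      by (auto simp: indep_12_set_def independent_set_def)
    have p1: "?P1 k"
    proof (intro allI impI conjI)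
      fix i assume i: "i < 7" and xs: "(i,k)\<in>?S"
      show "(i+1,k)\<notin>?S"
      proof
        assume ys: "(i+1,k)\<in>?S"
        then have "?adj (i,k) (i+1,k)" using xs setOf_sub by (auto simp: grid_adj_def)
        then show False using ind xs ys by blast
      qed
      show "(i,k+1)\<notin>?S"
      proof
        assume ys: "(i,k+1)\<in>?S"
        then have "?adj (i,k) (i,k+1)" using xs setOf_sub by (auto simp: grid_adj_def)
        then show False using ind xs ys by blast
      qed
    qed
    have p2: "?P2 k"
    proof (intro allI impI)
      fix i assume i: "i < 7" and xs: "(i,k)\<notin>?S"
      have "(i,k) \<in> ?V - ?S" using i k xs by (auto simp: grid_vertices_def)
      then show "1 \<le> card {u\<in>?S. ?adj (i,k) u} \<and> card {u\<in>?S. ?adj (i,k) u} \<le> 2"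
        using I by (auto simp: indep_12_set_def)
    qed
    show "?P1 k \<and> ?P2 k" using p1 p2 by blast
  qed
  have bwd: "\<forall>k<?n. ?P1 k \<and> ?P2 k \<Longrightarrow> indep_12_set ?V ?adj ?S"
  proof -
    assume H: "\<forall>k<?n. ?P1 k \<and> ?P2 k"
    have indep: "independent_set ?V ?adj ?S"
      unfolding independent_set_def
    proof (intro conjI ballI setOf_sub)
      fix x y assume xs: "x\<in>?S" and ys: "y\<in>?S"
      obtain i j where x: "x = (i,j)" by (cases x)
      obtain i' j' where y: "y = (i',j')" by (cases y)
      have xb: "i < 7" "j < ?n" using mem_setOf2 xs x by auto
      have yb: "i' < 7" "j' < ?n" using mem_setOf2 ys y by auto
      show "\<not> ?adj x y"
      proof
        assume a: "?adj x y"
        then have "(i = i' \<and> (j+1 = j' \<or> j'+1 = j)) \<or> (j = j' \<and> (i+1 = i' \<or> i'+1 = i))"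
          by (simp add: grid_adj_def x y)
        then show False
        proof (elim disjE conjE)
          assume "i = i'" "j+1 = j'" then show False using H xb xs ys x y by blast
        next
          assume "i = i'" "j'+1 = j" then show False using H yb xs ys x y by blast
        next
          assume "j = j'" "i+1 = i'" then show False using H xb xs ys x y by blast
        next
          assume "j = j'" "i'+1 = i" then show False using H yb xs ys x y by blast
        qed
      qed
    qed
    have cnt: "\<forall>v\<in>?V - ?S. 1 \<le> card {u\<in>?S. ?adj v u} \<and> card {u\<in>?S. ?adj v u} \<le> 2"
    proof
      fix v assume v: "v \<in> ?V - ?S"
      obtain i j where vv: "v = (i,j)" by (cases v)
      have "i < 7" "j < ?n" using v vv by (auto simp: grid_vertices_def)
      then show "1 \<le> card {u\<in>?S. ?adj v u} \<and> card {u\<in>?S. ?adj v u} \<le> 2"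
        using H v vv by blast
    qed
    have dom: "dominating_set ?V ?adj ?S"
      unfolding dominating_set_def
    proof (intro conjI ballI setOf_sub)
      fix v assume v: "v \<in> ?V - ?S"
      then have "1 \<le> card {u\<in>?S. ?adj v u}" using cnt by blast
      then have "{u\<in>?S. ?adj v u} \<noteq> {}" by (metis card.empty not_one_le_zero)
      then show "\<exists>u\<in>?S. ?adj v u" by blast
    qed
    show ?thesis unfolding indep_12_set_def using indep dom cnt by blast
  qed
  show ?thesis using t fwd bwd by blast
qed


definition colsOf :: "(nat \<times> nat) set \<Rightarrow> nat \<Rightarrow> bool list list" where
  "colsOf S n = map (\<lambda>j. map (\<lambda>i. (i,j)\<in>S) [0..<7]) [0..<n]"

lemma colsOf_len: "length (colsOf S n) = n" by (simp add: colsOf_def)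
lemma colsOf_lens: "\<forall>c\<in>set (colsOf S n). length c = 7" by (auto simp: colsOf_def)
lemma colsOf_set: "S \<subseteq> grid_vertices 7 n \<Longrightarrow> setOf (colsOf S n) = S"
  by (auto simp: colsOf_def setOf_def grid_vertices_def)

lemma card_setOf:
  assumes len: "\<forall>c\<in>set cs. length c = 7"
  shows "card (setOf cs) = sum_list (map cnt cs)"
proof -
  have eq: "setOf cs = (\<Union>j\<in>{0..<length cs}. (\<lambda>i. (i,j)) ` {i. i < 7 \<and> cs!j!i})"
    by (auto simp: setOf_def)
  have "card (setOf cs) = (\<Sum>j\<in>{0..<length cs}. card ((\<lambda>i. (i,j)) ` {i. i < 7 \<and> cs!j!i}))"
    unfolding eq by (rule card_UN_disjoint) auto
  also have "\<dots> = (\<Sum>j\<in>{0..<length cs}. cnt (cs!j))"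
  proof (rule sum.cong[OF refl])
    fix j assume j: "j \<in> {0..<length cs}"
    have "length (cs!j) = 7" using len j by auto
    then have "cnt (cs!j) = card {i. i < 7 \<and> cs!j!i}"
      by (simp add: cnt_def length_filter_conv_card)
    moreover have "card ((\<lambda>i. (i,j)) ` {i. i < 7 \<and> cs!j!i}) = card {i. i < 7 \<and> cs!j!i}"
      by (rule card_image) (auto simp: inj_on_def)
    ultimately show "card ((\<lambda>i. (i,j)) ` {i. i < 7 \<and> cs!j!i}) = cnt (cs!j)" by simp
  qed
  also have "\<dots> = sum_list (map cnt cs)"
    by (simp add: sum_list_sum_nth)
  finally show ?thesis .
qed

lemma pot:
  assumes ct: check_trans and cf: check_final
  shows "a \<in> set indepcols \<Longrightarrow> lkp T (a@b) = Some p \<Longrightarrow> tok (a#b#rest) \<Longrightarrow> rest \<noteq> [] \<Longrightarrow> last rest = Z \<Longrightarrow>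
    3 * int (sum_list (map cnt rest)) \<ge> 5 * (int (length rest) - 1) + 1 - p"
proof (induction rest arbitrary: a b p)
  case Nil then show ?case by simp
next
  case (Cons c rest')
  show ?case
  proof (cases "rest' = []")
    case True
    then have cZ: "c = Z" using Cons.prems by simp
    have okab: "ok a b Z" using Cons.prems True cZ by simp
    then have b: "b \<in> set indepcols" by (rule ok_mid)
    have h: "case lkp T (a@b) of None \<Rightarrow> True | Some p \<Rightarrow> ok a b Z \<longrightarrow> 1 \<le> p"
      using cf Cons.prems(1) b unfolding check_final_def by blast
    have "1 \<le> p" using h Cons.prems(2) okab by simp
    moreover have "cnt Z = 0" by (simp add: cnt_def Z_def)
    ultimately show ?thesis using True cZ by simp
  next
    case False
    then obtain d r where rd: "rest' = d # r" by (cases rest') auto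
    have okabc: "ok a b c" and tk: "tok (b#c#rest')" using Cons.prems rd by auto
    have b: "b \<in> set indepcols" using okabc by (rule ok_mid)
    have c: "c \<in> set indepcols" using tk rd by (auto intro: ok_mid)
    have h1: "case lkp T (a@b) of None \<Rightarrow> True | Some p \<Rightarrow>
      (\<forall>c\<in>set indepcols. ok a b c \<longrightarrow> (case lkp T (b@c) of None \<Rightarrow> False | Some q \<Rightarrow> q \<le> p + 3 * int (cnt c) - 5))"
      using ct Cons.prems(1) b unfolding check_trans_def by blast
    have h2: "case lkp T (b@c) of None \<Rightarrow> False | Some q \<Rightarrow> q \<le> p + 3 * int (cnt c) - 5"
      using h1 Cons.prems(2) c okabc by simp
    obtain q where q: "lkp T (b@c) = Some q" "q \<le> p + 3 * int (cnt c) - 5"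
      using h2 by (cases "lkp T (b@c)") auto
    have "3 * int (sum_list (map cnt rest')) \<ge> 5 * (int (length rest') - 1) + 1 - q"
      using Cons.IH[OF b q(1) tk False] Cons.prems(5) False by simp
    then show ?thesis using q(2) False by (simp add: algebra_simps)
  qed
qed

lemma lower:
  assumes ct: check_trans and cf: check_final and ci: check_init
    and tk: "tok (Z#cs@[Z])" and ne: "cs \<noteq> []"
  shows "3 * sum_list (map cnt cs) \<ge> 5 * length cs + 1"
proof -
  obtain b rest0 where cs: "cs = b # rest0" using ne by (cases cs) auto
  have "ok Z b (hd (rest0 @ [Z]))" using tk cs by (cases rest0) auto
  then have b: "b \<in> set indepcols" by (rule ok_mid)
  have h: "case lkp T (Z@b) of None \<Rightarrow> False | Some p \<Rightarrow> p \<le> 3 * int (cnt b) - 5"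
    using ci b unfolding check_init_def by blast
  obtain p where p: "lkp T (Z@b) = Some p" "p \<le> 3 * int (cnt b) - 5"
    using h by (cases "lkp T (Z@b)") auto
  have Zi: "Z \<in> set indepcols" by code_simp
  have "3 * int (sum_list (map cnt (rest0@[Z]))) \<ge> 5 * (int (length (rest0@[Z])) - 1) + 1 - p"
    by (rule pot[OF ct cf Zi p(1)]) (use tk cs in auto)
  moreover have "cnt Z = 0" by (simp add: cnt_def Z_def)
  ultimately have "3 * int (sum_list (map cnt rest0)) \<ge> 5 * int (length rest0) + 1 - p" by simp
  then have "3 * int (sum_list (map cnt cs)) \<ge> 5 * int (length cs) + 1" using p(2) cs by simp
  then show ?thesis by linarith
qed



definition Cy :: "bool list list" where "Cy = [[True, False, False, False, False, False, True], [False, False, False, True, False, False, False], [False, True, False, False, False, True, False], [False, False, False, True, False, False, False], [True, False, False, False, False, False, True], [False, False, True, False, True, False, False]]"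
definition c4 :: "bool list" where "c4 = [True, False, False, False, False, False, True]"
definition c5 :: "bool list" where "c5 = [False, False, True, False, True, False, False]"
definition Ptab :: "bool list list list" where "Ptab = [[[False, False, True, False, True, False, False], [True, False, False, False, False, False, True], [False, False, False, True, False, False, False], [False, True, False, False, False, True, False], [False, False, False, True, False, False, False]], [[False, True, False, False, False, True, False], [False, False, False, True, False, False, False], [True, False, True, False, False, False, True], [False, False, False, False, True, False, False], [False, True, False, False, False, True, False], [False, False, False, True, False, False, False]], [[True, False, False, False, True, False, False], [False, False, True, False, False, False, True], [False, True, False, False, False, True, False], [False, False, False, True, False, False, False]], [[False, False, True, False, True, False, False], [True, False, False, False, False, False, True], [False, False, False, True, False, False, False], [False, True, False, False, False, True, False], [False, False, False, True, False, False, False]], [[False, False, True, False, True, False, False], [True, False, False, False, False, False, True], [False, False, False, True, False, False, False], [False, True, False, False, False, True, False], [False, False, True, False, False, False, False], [True, False, False, False, True, False, True], [False, False, True, False, False, False, False], [False, True, False, False, False, True, False], [False, False, False, True, False, False, False]], [[False, False, True, False, True, False, False], [True, False, False, False, False, False, True], [False, False, False, True, False, False, False], [False, True, False, False, False, True, False], [False, False, False, True, False, False, False]]]"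
definition Ytab :: "bool list list list" where "Ytab = [[], [], [[True, False, False, False, False, False, True], [False, False, False, True, False, False, False], [False, True, False, False, False, True, False]], [[True, False, False, False, False, False, True], [False, False, False, True, False, False, False], [False, True, False, False, False, True, False]], [], [[True, False, False, False, False, True, False], [False, False, False, True, False, False, False], [False, True, False, False, False, False, True], [False, False, False, False, True, False, False], [True, False, True, False, False, True, False]]]"

lemma Cy_eq: "Cy = [Cy!0, Cy!1, Cy!2, Cy!3, c4, c5]" by (simp add: Cy_def c4_def c5_def)

lemma cyc_ok: "ok c4 c5 (Cy!0) \<and> ok c5 (Cy!0) (Cy!1) \<and> ok (Cy!0) (Cy!1) (Cy!2) \<and> ok (Cy!1) (Cy!2) (Cy!3)
  \<and> ok (Cy!2) (Cy!3) c4 \<and> ok (Cy!3) c4 c5" by code_simp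

lemma cyc: "tok (c4#c5#W) \<Longrightarrow> tok (c4#c5#concat (replicate k Cy) @ W)"
proof (induction k)
  case 0 then show ?case by simp
next
  case (Suc k)
  define R where "R = concat (replicate k Cy) @ W"
  have e: "concat (replicate (Suc k) Cy) @ W = Cy @ R" by (simp add: R_def)
  have e2: "Cy @ R = Cy!0 # Cy!1 # Cy!2 # Cy!3 # c4 # c5 # R" by (subst Cy_eq) simp
  have "tok (c4#c5#R)" using Suc unfolding R_def by simp
  then show ?case unfolding e e2 using cyc_ok by simp
qed

lemma cnt_Cy: "sum_list (map cnt Cy) = 10" by code_simp
lemma len_Cy: "\<forall>c\<in>set Cy. length c = 7" by code_simp

lemma tab_ok: "\<forall>r\<in>set [0..<6]. tok (Z # Ptab!r @ [c4,c5]) \<and> tok (c4 # c5 # Ytab!r @ [Z]) \<and>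
   (\<forall>c\<in>set (Ptab!r @ Ytab!r). length c = 7) \<and> length (Ptab!r) + length (Ytab!r) + 2 = 7 + r \<and>
   sum_list (map cnt (Ptab!r)) + sum_list (map cnt (Ytab!r)) + cnt c4 + cnt c5 = (5 * (7 + r) + 3) div 3"
  by code_simp

lemma build:
  assumes r: "r < 6"
  shows "\<exists>cs. length cs = 7 + r + 6 * k \<and> (\<forall>c\<in>set cs. length c = 7) \<and> tok (Z#cs@[Z]) \<and>
    sum_list (map cnt cs) = (5 * (7 + r) + 3) div 3 + 10 * k"
proof -
  let ?P = "Ptab!r" let ?Y = "Ytab!r"
  have t: "tok (Z # ?P @ [c4,c5])" "tok (c4 # c5 # ?Y @ [Z])" "\<forall>c\<in>set (?P @ ?Y). length c = 7"
    "length ?P + length ?Y + 2 = 7 + r"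
    "sum_list (map cnt ?P) + sum_list (map cnt ?Y) + cnt c4 + cnt c5 = (5 * (7 + r) + 3) div 3"
    using tab_ok r by auto
  let ?cs = "?P @ c4 # c5 # concat (replicate k Cy) @ ?Y"
  have l47: "length c4 = 7" "length c5 = 7" by (simp_all add: c4_def c5_def)
  define R where "R = concat (replicate k Cy) @ ?Y @ [Z]"
  have ta: "tok ((Z # ?P) @ c4 # c5 # R) \<longleftrightarrow> tok ((Z # ?P) @ [c4,c5]) \<and> tok (c4 # c5 # R)"
    by (rule tok_append)
  have t1: "tok ((Z # ?P) @ [c4,c5])" using t(1) by simp
  have t2: "tok (c4 # c5 # R)" unfolding R_def by (rule cyc[OF t(2)])
  have eqL: "Z # ?cs @ [Z] = (Z # ?P) @ c4 # c5 # R" by (simp add: R_def)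
  have tk: "tok (Z # ?cs @ [Z])" unfolding eqL using ta t1 t2 by blast
  have lens: "\<forall>c\<in>set ?cs. length c = 7" using t(3) l47 len_Cy by auto
  have sc: "sum_list (map cnt (concat (replicate k Cy))) = 10 * k"
    by (induction k) (simp_all add: cnt_Cy)
  have lc: "length (concat (replicate k Cy)) = 6 * k"
    by (induction k) (simp_all add: Cy_def)
  show ?thesis
    by (rule exI[of _ ?cs]) (use tk lens t(4,5) sc lc in auto)
qed


theorem mainTheorem8:
  fixes n :: nat
  assumes "n \<ge> 7"
  shows "(\<exists>S. indep_12_set (grid_vertices 7 n) (grid_adj 7 n) S) \<and>
         indep_12_number (grid_vertices 7 n) (grid_adj 7 n) = (5 * n + 3) div 3"
proof -
  define r where "r = (n - 7) mod 6"
  define k where "k = (n - 7) div 6"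
  have r6: "r < 6" by (simp add: r_def)
  have nrk: "n = 7 + r + 6 * k" using assms by (simp add: r_def k_def)
  obtain cs where cs: "length cs = 7 + r + 6 * k" "\<forall>c\<in>set cs. length c = 7" "tok (Z#cs@[Z])"
    "sum_list (map cnt cs) = (5 * (7 + r) + 3) div 3 + 10 * k"
    using build[OF r6, of k] by blast
  have val: "(5 * (7 + r) + 3) div 3 + 10 * k = (5 * n + 3) div 3" unfolding nrk by simp
  have ln: "length cs = n" using cs(1) nrk by simp
  have I0: "indep_12_set (grid_vertices 7 n) (grid_adj 7 n) (setOf cs)"
    using grid_iff[OF cs(2)] cs(3) ln by simp
  have C0: "card (setOf cs) = (5 * n + 3) div 3" using card_setOf[OF cs(2)] cs(4) val by simp
  have lowb: "(5 * n + 3) div 3 \<le> card S" if IS: "indep_12_set (grid_vertices 7 n) (grid_adj 7 n) S" for S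
  proof -
    have Ssub: "S \<subseteq> grid_vertices 7 n" using IS by (simp add: indep_12_set_def independent_set_def)
    let ?cs = "colsOf S n"
    have e: "setOf ?cs = S" using colsOf_set[OF Ssub] .
    have "indep_12_set (grid_vertices 7 (length ?cs)) (grid_adj 7 (length ?cs)) (setOf ?cs)"
      using IS e by (simp add: colsOf_len)
    then have tk: "tok (Z # ?cs @ [Z])" using grid_iff[OF colsOf_lens] by blast
    have ne: "?cs \<noteq> []" using assms colsOf_len[of S n] by auto
    have "3 * sum_list (map cnt ?cs) \<ge> 5 * length ?cs + 1" by (rule lower[OF ct cf ci tk ne])
    then have "3 * card S \<ge> 5 * n + 1" using card_setOf[OF colsOf_lens] e colsOf_len by metis
    then show ?thesis by linarith
  qed
  have "indep_12_number (grid_vertices 7 n) (grid_adj 7 n) = (5 * n + 3) div 3"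
    unfolding indep_12_number_def
  proof (rule Least_equality)
    show "\<exists>S. indep_12_set (grid_vertices 7 n) (grid_adj 7 n) S \<and> card S = (5 * n + 3) div 3"
      using I0 C0 by blast
  next
    fix y assume "\<exists>S. indep_12_set (grid_vertices 7 n) (grid_adj 7 n) S \<and> card S = y"
    then show "(5 * n + 3) div 3 \<le> y" using lowb by blast
  qed
  then show ?thesis using I0 by blast
qed

end
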